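(* For $\Lambda_1,\Lambda_2\in\mathcal{M}_2$ the following are equivalent: (1) $\Lambda_1(\mathbf{w})\le\Lambda_2(\mathbf{w})$ for all $\mathbf{w}\in\mathbb{R}_+^2$; (2) $(\Lambda_1*\Lambda)(\mathbf{w})\le(\Lambda_2*\Lambda)(\mathbf{w})$ for all $\mathbf{w}\in\mathbb{R}_+^2$ and all $\Lambda\in\mathcal{M}_2$.
   Context: $\mathcal{M}_2$ is the set of bivariate tail dependence functions $\Lambda(\mathbf{w})=\lim_{s\searrow0}C(s\mathbf{w})/s$, $\mathbf{w}\in\mathbb{R}_+^2$ ($\mathbb{R}_+=[0,\infty)$), of $2$-copulas $C$. The Markov product is $(\Lambda_1*\Lambda_2)(w_1,w_2):=\int_0^\infty\partial_2\Lambda_1(w_1,t)\,\partial_1\Lambda_2(t,w_2)\,dt$. *)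

theory Defs
  imports "HOL-Analysis.Analysis"
begin

text \<open>A bivariate copula, as a function on [0,1]^2 (values outside are irrelevant).\<close>
definition copula2 :: "(real \<Rightarrow> real \<Rightarrow> real) \<Rightarrow> bool" where
  "copula2 C \<longleftrightarrow>
     (\<forall>u\<in>{0..1}. C u 0 = 0 \<and> C 0 u = 0 \<and> C u 1 = u \<and> C 1 u = u) \<and>
     (\<forall>u1 u2 v1 v2. 0 \<le> u1 \<and> u1 \<le> u2 \<and> u2 \<le> 1 \<and> 0 \<le> v1 \<and> v1 \<le> v2 \<and> v2 \<le> 1 \<longrightarrow>
        C u2 v2 - C u2 v1 - C u1 v2 + C u1 v1 \<ge> 0)"

definition is_tdf :: "(real \<Rightarrow> real \<Rightarrow> real) \<Rightarrow> (real \<Rightarrow> real \<Rightarrow> real) \<Rightarrow> bool" where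
  "is_tdf C L \<longleftrightarrow>
     (\<forall>w1 \<ge> 0. \<forall>w2 \<ge> 0. ((\<lambda>s. C (s * w1) (s * w2) / s) \<longlongrightarrow> L w1 w2) (at_right 0))"

definition M2 :: "(real \<Rightarrow> real \<Rightarrow> real) set" where
  "M2 = {L. \<exists>C. copula2 C \<and> is_tdf C L}"

definition markov_prod :: "(real \<Rightarrow> real \<Rightarrow> real) \<Rightarrow> (real \<Rightarrow> real \<Rightarrow> real) \<Rightarrow> real \<Rightarrow> real \<Rightarrow> real" where
  "markov_prod L1 L2 w1 w2 =
     (LINT t:{0..}|lebesgue. deriv (\<lambda>x. L1 w1 x) t * deriv (\<lambda>x. L2 x w2) t)"

end

theory Submission
  imports Defs
begin


lemma ev_small:
  fixes M :: real
  assumes "0 \<le> M"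
  shows "eventually (\<lambda>s. 0 < s \<and> s * M \<le> 1) (at_right 0)"
proof -
  have "\<exists>b>0. \<forall>y>0. y < b \<longrightarrow> 0 < y \<and> y * M \<le> 1"
  proof (intro exI[of _ "1/(M+1)"] conjI allI impI)
    show "0 < 1/(M+1)" using assms by simp
  next
    fix y :: real assume "0 < y" "y < 1/(M+1)"
    then show "0 < y" by simp
    have "y * (M+1) < 1" using \<open>y < 1/(M+1)\<close> assms by (simp add: field_simps)
    then show "y * M \<le> 1" using \<open>0 < y\<close> by (simp add: algebra_simps)
  qed
  then show ?thesis by (simp add: eventually_at_right_field)
qed

lemma copula_lip2:
  assumes "copula2 C" "0 \<le> u" "u \<le> 1" "0 \<le> v" "v \<le> v'" "v' \<le> 1"
  shows "0 \<le> C u v' - C u v \<and> C u v' - C u v \<le> v' - v"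
proof -
  have b: "\<forall>u\<in>{0..1}. C u 0 = 0 \<and> C 0 u = 0 \<and> C u 1 = u \<and> C 1 u = u"
   and r: "\<And>u1 u2 v1 v2. 0 \<le> u1 \<and> u1 \<le> u2 \<and> u2 \<le> 1 \<and> 0 \<le> v1 \<and> v1 \<le> v2 \<and> v2 \<le> 1 \<Longrightarrow>
        C u2 v2 - C u2 v1 - C u1 v2 + C u1 v1 \<ge> 0"
    using assms(1) unfolding copula2_def by blast+
  have "C u v' - C u v - C 0 v' + C 0 v \<ge> 0" using r[of 0 u v v'] assms by auto
  moreover have "C 1 v' - C 1 v - C u v' + C u v \<ge> 0" using r[of u 1 v v'] assms by auto
  moreover have "C 0 v' = 0" "C 0 v = 0" "C 1 v' = v'" "C 1 v = v" using b assms by auto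
  ultimately show ?thesis by linarith
qed

lemma copula_transpose:
  assumes "copula2 C" shows "copula2 (\<lambda>u v. C v u)"
  using assms unfolding copula2_def by (auto simp: algebra_simps)

lemma M2_transpose:
  assumes "L \<in> M2" shows "(\<lambda>x y. L y x) \<in> M2"
proof -
  obtain C where C: "copula2 C" "is_tdf C L" using assms unfolding M2_def by blast
  have "copula2 (\<lambda>u v. C v u)" by (rule copula_transpose[OF C(1)])
  moreover have "is_tdf (\<lambda>u v. C v u) (\<lambda>x y. L y x)" using C(2) unfolding is_tdf_def by auto
  ultimately show ?thesis unfolding M2_def by blast
qed

lemma M2_min: "(\<lambda>x y. min x y) \<in> M2"
proof -
  have "copula2 (\<lambda>u v. min u v)" unfolding copula2_def by (auto simp: min_def)
  moreover have "is_tdf (\<lambda>u v. min u v) (\<lambda>x y. min x y)"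
    unfolding is_tdf_def
  proof (intro allI impI)
    fix w1 w2 :: real assume "0 \<le> w1" "0 \<le> w2"
    have "eventually (\<lambda>s. min w1 w2 = min (s*w1) (s*w2) / s) (at_right (0::real))"
      using eventually_at_right_less[of 0] 
      by eventually_elim (auto simp: min_def)
    then show "((\<lambda>s. min (s * w1) (s * w2) / s) \<longlongrightarrow> min w1 w2) (at_right 0)"
      by (rule Lim_transform_eventually[OF tendsto_const])
  qed
  ultimately show ?thesis unfolding M2_def by blast
qed

lemma trivial_ar: "at_right (0::real) \<noteq> bot" by simp

lemma tdf_lim:
  assumes "is_tdf C L" "0 \<le> x" "0 \<le> y"
  shows "((\<lambda>s. C (s*x) (s*y) / s) \<longlongrightarrow> L x y) (at_right 0)"
  using assms unfolding is_tdf_def by blast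

lemma M2_lip2:
  assumes "L \<in> M2" "0 \<le> x" "0 \<le> y" "y \<le> y'"
  shows "0 \<le> L x y' - L x y \<and> L x y' - L x y \<le> y' - y"
proof -
  obtain C where C: "copula2 C" "is_tdf C L" using assms unfolding M2_def by blast
  have lim: "((\<lambda>s. C (s*x) (s*y') / s - C (s*x) (s*y) / s) \<longlongrightarrow> L x y' - L x y) (at_right 0)"
    using tdf_lim[OF C(2)] assms by (intro tendsto_diff) auto
  have xy: "0 \<le> x + y'" using assms by simp
  have ev: "eventually (\<lambda>s. 0 \<le> C (s*x) (s*y') / s - C (s*x) (s*y) / s \<and>
        C (s*x) (s*y') / s - C (s*x) (s*y) / s \<le> y' - y) (at_right 0)"
    using ev_small[OF xy]
  proof eventually_elim
    case (elim s)
    have "s * x \<le> 1" "s * y' \<le> 1" using elim assms by (auto simp: algebra_simps intro: order_trans[rotated])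
    then have h: "0 \<le> C (s*x) (s*y') - C (s*x) (s*y) \<and> C (s*x) (s*y') - C (s*x) (s*y) \<le> s*y' - s*y"
      using copula_lip2[OF C(1), of "s*x" "s*y" "s*y'"] elim assms
      by (auto intro: mult_left_mono)
    have e: "C (s*x) (s*y') / s - C (s*x) (s*y) / s = (C (s*x) (s*y') - C (s*x) (s*y)) / s"
      by (simp add: diff_divide_distrib)
    show ?case unfolding e using h elim
      by (auto simp: divide_simps algebra_simps)
  qed
  have e1: "eventually (\<lambda>s. 0 \<le> C (s*x) (s*y') / s - C (s*x) (s*y) / s) (at_right 0)"
    using ev by eventually_elim auto
  have e2: "eventually (\<lambda>s. C (s*x) (s*y') / s - C (s*x) (s*y) / s \<le> y' - y) (at_right 0)"
    using ev by eventually_elim auto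
  show ?thesis
    using tendsto_lowerbound[OF lim e1 trivial_ar] tendsto_upperbound[OF lim e2 trivial_ar] by auto
qed

lemma M2_zero:
  assumes "L \<in> M2" "0 \<le> x"
  shows "L x 0 = 0"
proof -
  obtain C where C: "copula2 C" "is_tdf C L" using assms unfolding M2_def by blast
  have lim: "((\<lambda>s. C (s*x) (s*0) / s) \<longlongrightarrow> L x 0) (at_right 0)"
    by (rule tdf_lim[OF C(2) assms(2)]) simp
  have "eventually (\<lambda>s. 0 = C (s*x) (s*0) / s) (at_right 0)"
    using ev_small[OF assms(2)]
  proof eventually_elim
    case (elim s)
    have "s * x \<in> {0..1}" using elim assms by auto
    then show ?case using C(1) unfolding copula2_def by auto
  qed
  then have "((\<lambda>s. C (s*x) (s*0) / s) \<longlongrightarrow> 0) (at_right 0)"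
    by (rule Lim_transform_eventually[OF tendsto_const])
  then show ?thesis using tendsto_unique[OF trivial_ar lim] by simp
qed

lemma M2_2inc:
  assumes "L \<in> M2" "0 \<le> x" "x \<le> x'" "0 \<le> y" "y \<le> y'"
  shows "0 \<le> L x' y' - L x' y - L x y' + L x y"
proof -
  obtain C where C: "copula2 C" "is_tdf C L" using assms unfolding M2_def by blast
  have r: "\<And>u1 u2 v1 v2. 0 \<le> u1 \<and> u1 \<le> u2 \<and> u2 \<le> 1 \<and> 0 \<le> v1 \<and> v1 \<le> v2 \<and> v2 \<le> 1 \<Longrightarrow>
        C u2 v2 - C u2 v1 - C u1 v2 + C u1 v1 \<ge> 0"
    using C(1) unfolding copula2_def by blast
  let ?D = "\<lambda>s. C (s*x') (s*y') / s - C (s*x') (s*y) / s - C (s*x) (s*y') / s + C (s*x) (s*y) / s"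
  have lim: "(?D \<longlongrightarrow> L x' y' - L x' y - L x y' + L x y) (at_right 0)"
    using tdf_lim[OF C(2)] assms by (intro tendsto_diff tendsto_add) auto
  have xy: "0 \<le> x' + y'" using assms by simp
  have ev: "eventually (\<lambda>s. 0 \<le> ?D s) (at_right 0)"
    using ev_small[OF xy]
  proof eventually_elim
    case (elim s)
    have "s * x' \<le> 1" "s * y' \<le> 1" using elim assms by (auto simp: algebra_simps intro: order_trans[rotated])
    moreover have "s * x \<le> s * x'" "s * y \<le> s * y'" using elim assms by (auto intro: mult_left_mono)
    ultimately have h: "0 \<le> C (s*x') (s*y') - C (s*x') (s*y) - C (s*x) (s*y') + C (s*x) (s*y)"
      using r[of "s*x" "s*x'" "s*y" "s*y'"] elim assms by auto
    have e: "?D s = (C (s*x') (s*y') - C (s*x') (s*y) - C (s*x) (s*y') + C (s*x) (s*y)) / s"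
      by (simp add: diff_divide_distrib add_divide_distrib)
    show ?case unfolding e using h elim by simp
  qed
  show ?thesis using tendsto_lowerbound[OF lim ev trivial_ar] .
qed

lemma M2_homog:
  assumes "L \<in> M2" "0 < c" "0 \<le> x" "0 \<le> y"
  shows "L (c*x) (c*y) = c * L x y"
proof -
  obtain C where C: "copula2 C" "is_tdf C L" using assms unfolding M2_def by blast
  have lim1: "((\<lambda>s. C (s*(c*x)) (s*(c*y)) / s) \<longlongrightarrow> L (c*x) (c*y)) (at_right 0)"
    using tdf_lim[OF C(2)] assms by auto
  have fl: "filterlim (\<lambda>s. s * c) (at_right 0) (at_right (0::real))"
  proof -
    have "((\<lambda>s. s * c) \<longlongrightarrow> 0 * c) (at_right (0::real))"
      by (intro tendsto_intros)
    moreover have "eventually (\<lambda>s. s * c \<in> {0<..} \<and> s * c \<noteq> 0) (at_right (0::real))"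
      using eventually_at_right_less[of "0::real"] by eventually_elim (use assms in auto)
    ultimately show ?thesis by (simp add: filterlim_at)
  qed
  have lim2: "((\<lambda>s. C ((s*c)*x) ((s*c)*y) / (s*c)) \<longlongrightarrow> L x y) (at_right 0)"
    using filterlim_compose[OF tdf_lim[OF C(2) assms(3,4)] fl] by (simp add: o_def)
  have lim3: "((\<lambda>s. c * (C ((s*c)*x) ((s*c)*y) / (s*c))) \<longlongrightarrow> c * L x y) (at_right 0)"
    by (intro tendsto_mult lim2 tendsto_const)
  have ev3: "eventually (\<lambda>s. c * (C ((s*c)*x) ((s*c)*y) / (s*c)) = C (s*(c*x)) (s*(c*y)) / s) (at_right (0::real))"
    using eventually_at_right_less[of "0::real"] by eventually_elim (use assms in \<open>auto simp: ac_simps\<close>)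
  have "((\<lambda>s. C (s*(c*x)) (s*(c*y)) / s) \<longlongrightarrow> c * L x y) (at_right 0)"
    by (rule Lim_transform_eventually[OF lim3 ev3])
  then show ?thesis using tendsto_unique[OF trivial_ar lim1] by simp
qed



lemma concave3:
  fixes f :: "real \<Rightarrow> real"
  assumes lip: "\<And>x y. 0 \<le> x \<Longrightarrow> x \<le> y \<Longrightarrow> 0 \<le> f y - f x \<and> f y - f x \<le> y - x"
  and scal: "\<And>p q l. 0 \<le> p \<Longrightarrow> p \<le> q \<Longrightarrow> 1 \<le> l \<Longrightarrow> f (l*q) - f (l*p) \<le> l * (f q - f p)"
  and xyz: "0 \<le> x" "x < y" "y < z"
  shows "(f z - f y) * (y - x) \<le> (f y - f x) * (z - y)"
proof -
  have geo: "(f q - f m)*(m - p) \<le> (f m - f p)*(q - m)"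
    if "0 < p" "p < m" "m*m = p*q" for p m q
  proof -
    define l where "l = m / p"
    have l1: "1 \<le> l" using that by (simp add: l_def)
    have lm: "l * m = q" using that by (simp add: l_def field_simps)
    have lp: "l * p = m" using that by (simp add: l_def)
    have "f (l*m) - f (l*p) \<le> l * (f m - f p)" using scal[of p m l] that l1 by simp
    then have "f q - f m \<le> l * (f m - f p)" by (simp add: lm lp)
    then have "(f q - f m)*(m - p) \<le> l * (f m - f p) * (m - p)"
      using that by (intro mult_right_mono) auto
    also have "\<dots> = (f m - f p) * (l*m - l*p)" by (simp add: algebra_simps)
    finally show ?thesis by (simp add: lm lp)
  qed
  have cont: "continuous_on {x..z} f"
    unfolding continuous_on_iff
  proof (intro ballI allI impI)
    fix a e assume a: "a \<in> {x..z}" and e: "(0::real) < e"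
    show "\<exists>d>0. \<forall>b\<in>{x..z}. dist b a < d \<longrightarrow> dist (f b) (f a) < e"
    proof (intro exI[of _ e] conjI ballI impI)
      fix b assume b: "b \<in> {x..z}" "dist b a < e"
      have "\<bar>f b - f a\<bar> \<le> \<bar>b - a\<bar>"
      proof (cases "a \<le> b")
        case True then show ?thesis using lip[of a b] a xyz by auto
      next
        case False then show ?thesis using lip[of b a] b xyz by auto
      qed
      then show "dist (f b) (f a) < e" using b by (simp add: dist_real_def)
    qed (use e in auto)
  qed
  define k where "k = (f z - f x) / (z - x)"
  define h where "h t = f t - f x - k * (t - x)" for t
  have hcont: "continuous_on {x..z} h" unfolding h_def
    by (intro continuous_intros cont)
  have hx: "h x = 0" by (simp add: h_def)
  have hz: "h z = 0" using xyz by (simp add: h_def k_def)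
  have hpos: "\<forall>t\<in>{x..z}. 0 \<le> h t"
  proof (rule ccontr)
    assume "\<not> ?thesis"
    then obtain t2 where t2: "t2 \<in> {x..z}" "h t2 < 0" by force
    obtain t1 where t1: "t1 \<in> {x..z}" "\<forall>t\<in>{x..z}. h t1 \<le> h t"
      using continuous_attains_inf[OF compact_Icc _ hcont] xyz by fastforce
    define m where "m = h t1"
    have mneg: "m < 0" using t1 t2 m_def by force
    define Z where "Z = {t\<in>{x..z}. h t = m}"
    have Zcl: "closed Z" unfolding Z_def
      by (rule continuous_closed_preimage_constant[OF hcont closed_atLeastAtMost])
    have Zne: "Z \<noteq> {}" using t1 unfolding Z_def m_def by blast
    have Zbdd: "bdd_below Z" unfolding Z_def by (auto intro: bdd_belowI[of _ x])
    define t0 where "t0 = Inf Z"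
    have t0Z: "t0 \<in> Z" unfolding t0_def by (rule closed_contains_Inf[OF Zne Zbdd Zcl])
    have t0x: "x < t0"
    proof -
      have "t0 \<noteq> x" using t0Z hx mneg unfolding Z_def by auto
      then show ?thesis using t0Z unfolding Z_def by auto
    qed
    have t0z: "t0 < z"
    proof -
      have "t0 \<noteq> z" using t0Z hz mneg unfolding Z_def by auto
      then show ?thesis using t0Z unfolding Z_def by auto
    qed
    have t0pos: "0 < t0" using t0x xyz by linarith
    obtain \<rho> where \<rho>: "1 < \<rho>" "x \<le> t0 / \<rho>" "t0 * \<rho> \<le> z"
    proof (cases "x = 0")
      case True
      show ?thesis
      proof (rule that[of "z / t0"])
        show "1 < z / t0" using t0pos t0z by simp
        show "x \<le> t0 / (z / t0)" using True t0pos t0z by simp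
        show "t0 * (z / t0) \<le> z" using t0pos by simp
      qed
    next
      case False
      then have xp: "0 < x" using xyz by simp
      show ?thesis
      proof (rule that[of "min (t0/x) (z/t0)"])
        show "1 < min (t0/x) (z/t0)" using t0pos t0z t0x xp by simp
        have "t0 / (t0/x) \<le> t0 / min (t0/x) (z/t0)"
          using t0pos t0z t0x xp by (intro divide_left_mono) auto
        then show "x \<le> t0 / min (t0/x) (z/t0)" using t0pos xp by simp
        have "t0 * min (t0/x) (z/t0) \<le> t0 * (z/t0)" using t0pos by (intro mult_left_mono) auto
        then show "t0 * min (t0/x) (z/t0) \<le> z" using t0pos by simp
      qed
    qed
    define p where "p = t0 / \<rho>"
    define q where "q = t0 * \<rho>"
    have pq: "0 < p" "p < t0" "t0 < q" "t0 * t0 = p * q" "x \<le> p" "q \<le> z"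
      using \<rho> t0pos by (auto simp: p_def q_def field_simps)
    have g: "(f q - f t0)*(t0 - p) \<le> (f t0 - f p)*(q - t0)"
      by (rule geo) (use pq in auto)
    have "(h q - h t0)*(t0 - p) - (h t0 - h p)*(q - t0) = (f q - f t0)*(t0 - p) - (f t0 - f p)*(q - t0)"
      unfolding h_def by (simp add: algebra_simps)
    with g have gh: "(h q - h t0)*(t0 - p) \<le> (h t0 - h p)*(q - t0)" by linarith
    have ht0: "h t0 = m" using t0Z unfolding Z_def by auto
    have hq: "m \<le> h q" using t1 pq xyz unfolding m_def by auto
    have hp: "m < h p"
    proof -
      have "m \<le> h p" using t1 pq xyz t0z unfolding m_def by auto
      moreover have "p \<notin> Z"
      proof
        assume "p \<in> Z"
        then have "t0 \<le> p" unfolding t0_def by (rule cInf_lower[OF _ Zbdd])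
        then show False using pq by simp
      qed
      then have "h p \<noteq> m" using pq t0z unfolding Z_def by auto
      ultimately show ?thesis by simp
    qed
    have "0 \<le> (h q - h t0)*(t0 - p)" using hq ht0 pq by simp
    moreover have "(h t0 - h p)*(q - t0) < 0" using hp ht0 pq by (intro mult_neg_pos) auto
    ultimately show False using gh by linarith
  qed
  have "0 \<le> h y" using hpos xyz by auto
  then have "k * (y - x) \<le> f y - f x" unfolding h_def by simp
  then have "(f z - f x) / (z - x) * (y - x) * (z - x) \<le> (f y - f x) * (z - x)"
    unfolding k_def using xyz by (intro mult_right_mono) auto
  then have "(f z - f x) * (y - x) \<le> (f y - f x) * (z - x)" using xyz by simp
  then show ?thesis by (simp add: algebra_simps)
qed

lemma oned:
  fixes f :: "real \<Rightarrow> real"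
  assumes f0: "f 0 = 0"
  and lip: "\<And>x y. 0 \<le> x \<Longrightarrow> x \<le> y \<Longrightarrow> 0 \<le> f y - f x \<and> f y - f x \<le> y - x"
  and scal: "\<And>p q l. 0 \<le> p \<Longrightarrow> p \<le> q \<Longrightarrow> 1 \<le> l \<Longrightarrow> f (l*q) - f (l*p) \<le> l * (f q - f p)"
  shows "\<exists>r E. (\<forall>t. 0 \<le> r t \<and> r t \<le> 1) \<and> (\<forall>a b. a \<le> b \<longrightarrow> r b \<le> r a) \<and> countable E \<and>
     (\<forall>t. 0 < t \<longrightarrow> t \<notin> E \<longrightarrow> (f has_real_derivative r t) (at t)) \<and>
     (\<forall>T\<ge>0. (r has_integral f T) {0..T})"
proof -
  define sl where "sl a b = (f b - f a) / (b - a)" for a b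
  have slb: "0 \<le> sl x y \<and> sl x y \<le> 1" if "0 \<le> x" "x < y" for x y
    using lip[of x y] that by (auto simp: sl_def divide_simps)
  have sl3: "sl y z \<le> sl x y" if "0 \<le> x" "x < y" "y < z" for x y z
  proof -
    have "(f z - f y) * (y - x) \<le> (f y - f x) * (z - y)"
      by (rule concave3[OF lip scal that]) auto
    then show ?thesis using that by (simp add: sl_def divide_simps mult.commute)
  qed
  define r where "r t = (if t \<le> 0 then 1 else Sup (sl t ` {t<..}))" for t
  have ne: "sl t ` {t<..} \<noteq> {}" for t by auto
  have bdd: "bdd_above (sl t ` {t<..})" if "0 < t" for t
    using slb that by (intro bdd_aboveI[of _ 1]) auto
  have r01: "0 \<le> r t \<and> r t \<le> 1" for t
  proof (cases "t \<le> 0")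
    case True then show ?thesis by (simp add: r_def)
  next
    case False
    have "sl t (t+1) \<le> Sup (sl t ` {t<..})" using bdd[of t] False by (intro cSup_upper) auto
    moreover have "0 \<le> sl t (t+1)" using slb[of t "t+1"] False by auto
    moreover have "Sup (sl t ` {t<..}) \<le> 1" using slb False by (intro cSup_least) auto
    ultimately show ?thesis using False by (simp add: r_def)
  qed
  have rup: "sl x y \<le> r x" if "0 \<le> x" "x < y" for x y
  proof (cases "x = 0")
    case True then show ?thesis using slb[OF that] by (simp add: r_def)
  next
    case False
    then have "0 < x" using that by simp
    then show ?thesis using that bdd[of x] by (auto simp: r_def intro!: cSup_upper)
  qed
  have rlow: "r y \<le> sl x y" if "0 \<le> x" "x < y" for x y
  proof -
    have "Sup (sl y ` {y<..}) \<le> sl x y" using sl3 that by (intro cSup_least) auto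
    then show ?thesis using that by (simp add: r_def)
  qed
  have ranti: "r b \<le> r a" if "a \<le> b" for a b
  proof (cases "b \<le> 0")
    case True then show ?thesis using that by (simp add: r_def)
  next
    case False
    show ?thesis
    proof (cases "a \<le> 0")
      case True then show ?thesis using r01[of b] by (simp add: r_def)
    next
      case False
      show ?thesis
      proof (cases "a = b")
        case True then show ?thesis by simp
      next
        case False
        then show ?thesis using rlow[of a b] rup[of a b] \<open>\<not> a \<le> 0\<close> that by fastforce
      qed
    qed
  qed
  define E where "E = {t\<in>{0<..}. \<not> continuous (at t within {0<..}) (\<lambda>t. - r t)}"
  have cE: "countable E" unfolding E_def
    by (rule mono_on_ctble_discont) (auto simp: mono_on_def intro: ranti)
  have der: "(f has_real_derivative r t) (at t)" if "0 < t" "t \<notin> E" for t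
  proof -
    have "continuous (at t within {0<..}) (\<lambda>t. - r t)" using that unfolding E_def by auto
    then have "isCont (\<lambda>t. - r t) t" using at_within_open[of t "{0<..}"] that by simp
    then have "((\<lambda>t. - r t) \<longlongrightarrow> - r t) (at t)" by (simp add: isCont_def)
    from tendsto_minus[OF this] have rc: "(r \<longlongrightarrow> r t) (at t)" by simp
    have ab: "((\<lambda>y. \<bar>r y - r t\<bar>) \<longlongrightarrow> \<bar>r t - r t\<bar>) (at t)"
      by (intro tendsto_intros rc)
    have evb: "eventually (\<lambda>y. \<bar>(f y - f t) / (y - t) - r t\<bar> \<le> \<bar>r y - r t\<bar>) (at t)"
      unfolding eventually_at
    proof (intro exI[of _ t] conjI ballI impI)
      fix y assume y: "y \<in> UNIV" "y \<noteq> t \<and> dist y t < t"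
      then have ypos: "0 < y" by (auto simp: dist_real_def)
      show "\<bar>(f y - f t) / (y - t) - r t\<bar> \<le> \<bar>r y - r t\<bar>"
      proof (cases "t < y")
        case True
        have "r y \<le> sl t y" "sl t y \<le> r t" using rlow[of t y] rup[of t y] True that by auto
        then show ?thesis by (simp add: sl_def)
      next
        case False
        then have "y < t" using y by auto
        have "r t \<le> sl y t" "sl y t \<le> r y" using rlow[of y t] rup[of y t] \<open>y < t\<close> ypos by auto
        moreover have "(f y - f t) / (y - t) = sl y t"
          by (simp add: sl_def) (metis minus_diff_eq minus_divide_divide)
        ultimately show ?thesis by simp
      qed
    qed (use that in auto)
    have "((\<lambda>y. (f y - f t) / (y - t)) \<longlongrightarrow> r t) (at t)"
    proof (rule tendsto_sandwich[of "\<lambda>y. r t - \<bar>r y - r t\<bar>" _ _ "\<lambda>y. r t + \<bar>r y - r t\<bar>"])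
      show "eventually (\<lambda>y. r t - \<bar>r y - r t\<bar> \<le> (f y - f t) / (y - t)) (at t)"
        using evb by eventually_elim linarith
      show "eventually (\<lambda>y. (f y - f t) / (y - t) \<le> r t + \<bar>r y - r t\<bar>) (at t)"
        using evb by eventually_elim linarith
      show "((\<lambda>y. r t - \<bar>r y - r t\<bar>) \<longlongrightarrow> r t) (at t)"
        using tendsto_diff[OF tendsto_const ab] by simp
      show "((\<lambda>y. r t + \<bar>r y - r t\<bar>) \<longlongrightarrow> r t) (at t)"
        using tendsto_add[OF tendsto_const ab] by simp
    qed
    then show ?thesis by (simp add: has_field_derivative_iff)
  qed
  have rint: "r integrable_on {a..b}" for a b
  proof -
    have "mono_on {a..b} (\<lambda>t. - r t)" by (auto simp: mono_on_def intro: ranti)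
    then have "(\<lambda>t. - r t) integrable_on {a..b}" by (rule integrable_on_mono_on)
    then have "(\<lambda>t. - (- r t)) integrable_on {a..b}" by (rule integrable_neg)
    then show ?thesis by simp
  qed
  define F where "F y = integral {0..y} r" for y
  have key: "\<bar>(f y - f x) - (F y - F x)\<bar> \<le> (r x - r y) * (y - x)" if "0 \<le> x" "x \<le> y" for x y
  proof -
    have FF: "F y - F x = integral {x..y} r"
      using Henstock_Kurzweil_Integration.integral_combine[of 0 x y r] that rint
      by (simp add: F_def)
    have i1: "integral {x..y} (\<lambda>_. r y) \<le> integral {x..y} r"
      by (rule integral_le) (auto intro: rint ranti)
    have i2: "integral {x..y} r \<le> integral {x..y} (\<lambda>_. r x)"
      by (rule integral_le) (auto intro: rint ranti)
    have c1: "integral {x..y} (\<lambda>_. r y) = (y - x) * r y" using that by (simp add: content_real)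
    have c2: "integral {x..y} (\<lambda>_. r x) = (y - x) * r x" using that by (simp add: content_real)
    have fb: "(y - x) * r y \<le> f y - f x \<and> f y - f x \<le> (y - x) * r x"
    proof (cases "x = y")
      case True then show ?thesis by simp
    next
      case False
      then have xy: "x < y" using that by simp
      have "r y \<le> sl x y" "sl x y \<le> r x" using rlow[OF that(1) xy] rup[OF that(1) xy] by auto
      then show ?thesis using xy by (simp add: sl_def divide_simps mult.commute)
    qed
    have I1: "(y - x) * r y \<le> integral {x..y} r" using i1 c1 that by simp
    have I2: "integral {x..y} r \<le> (y - x) * r x" using i2 c2 that by simp
    have eq: "(r x - r y) * (y - x) = (y - x) * r x - (y - x) * r y" by (simp add: algebra_simps)
    show ?thesis unfolding FF eq abs_le_iff using I1 I2 fb by linarith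
  qed
  have ftc: "(r has_integral f T) {0..T}" if T: "0 \<le> T" for T
  proof -
    have small: "\<bar>f T - F T\<bar> \<le> T / real n" if n: "0 < n" for n :: nat
    proof -
      define xs where "xs i = T * real i / real n" for i :: nat
      define G where "G y = f y - F y" for y
      have x0: "xs 0 = 0" and xn: "xs n = T" using n by (auto simp: xs_def)
      have xs0: "0 \<le> xs i" for i using T by (simp add: xs_def)
      have xsS: "xs (Suc i) - xs i = T / real n" for i by (simp add: xs_def algebra_simps add_divide_distrib)
      have Tn: "0 \<le> T / real n" using T by simp
      have xsm: "xs i \<le> xs (Suc i)" for i using xsS[of i] Tn by linarith
      have G0: "G 0 = 0" by (simp add: G_def F_def f0)
      have "G T - G 0 = (\<Sum>i<n. G (xs (Suc i)) - G (xs i))"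
        by (subst sum_lessThan_telescope) (simp add: x0 xn)
      then have "G T = (\<Sum>i<n. G (xs (Suc i)) - G (xs i))" using G0 by simp
      then have "\<bar>G T\<bar> \<le> (\<Sum>i<n. \<bar>G (xs (Suc i)) - G (xs i)\<bar>)"
        using sum_abs[of "\<lambda>i. G (xs (Suc i)) - G (xs i)" "{..<n}"] by simp
      also have "\<dots> \<le> (\<Sum>i<n. (r (xs i) - r (xs (Suc i))) * (T / real n))"
      proof (rule sum_mono)
        fix i assume "i \<in> {..<n}"
        have "\<bar>G (xs (Suc i)) - G (xs i)\<bar> = \<bar>(f (xs (Suc i)) - f (xs i)) - (F (xs (Suc i)) - F (xs i))\<bar>"
          by (simp add: G_def algebra_simps)
        also have "\<dots> \<le> (r (xs i) - r (xs (Suc i))) * (xs (Suc i) - xs i)"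
          by (rule key[OF xs0 xsm])
        finally show "\<bar>G (xs (Suc i)) - G (xs i)\<bar> \<le> (r (xs i) - r (xs (Suc i))) * (T / real n)"
          by (simp add: xsS)
      qed
      also have "\<dots> = (r 0 - r T) * (T / real n)"
        unfolding sum_distrib_right[symmetric]
        using sum_lessThan_telescope'[of "\<lambda>i. r (xs i)" n] x0 xn by simp
      also have "\<dots> \<le> 1 * (T / real n)"
        using r01[of 0] r01[of T] T by (intro mult_right_mono) auto
      finally show ?thesis by (simp add: G_def)
    qed
    have "f T = F T"
    proof (rule ccontr)
      assume "f T \<noteq> F T"
      then have d: "0 < \<bar>f T - F T\<bar>" by simp
      obtain n :: nat where n: "T / \<bar>f T - F T\<bar> < real n" using reals_Archimedean2 by blast
      have "0 \<le> T / \<bar>f T - F T\<bar>" using T d by simp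
      then have "0 < real n" using n by linarith
      then have "0 < n" by simp
      then have "T < real n * \<bar>f T - F T\<bar>" using n d by (simp add: field_simps)
      moreover have "\<bar>f T - F T\<bar> * real n \<le> T" using small[OF \<open>0 < n\<close>] \<open>0 < n\<close> by (simp add: field_simps)
      ultimately show False by (simp add: mult.commute)
    qed
    then show ?thesis using rint[of 0 T] by (simp add: F_def integrable_integral)
  qed
  show ?thesis
    by (rule exI[of _ r], rule exI[of _ E]) (use r01 ranti cE der ftc in auto)
qed



lemma antimono_meas:
  fixes r :: "real \<Rightarrow> real"
  assumes "\<And>a b. a \<le> b \<Longrightarrow> r b \<le> r a"
  shows "r \<in> borel_measurable lebesgue"
proof -
  have "mono (\<lambda>t. - r t)" using assms by (auto simp: mono_def)
  then have "(\<lambda>t. - r t) \<in> borel_measurable borel" by (rule borel_measurable_mono)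
  then have "(\<lambda>t. - (- r t)) \<in> borel_measurable borel" by measurable
  then have "r \<in> borel_measurable lborel" by simp
  then show ?thesis by (rule measurable_completion)
qed

lemma ind_meas:
  fixes S :: "real set"
  assumes "S \<in> sets borel"
  shows "(indicator S :: real \<Rightarrow> real) \<in> borel_measurable lebesgue"
proof -
  have "(indicator S :: real \<Rightarrow> real) \<in> borel_measurable lborel" using assms by simp
  then show ?thesis by (rule measurable_completion)
qed

lemma ind_mult_meas:
  fixes S :: "real set" and r :: "real \<Rightarrow> real"
  assumes "S \<in> sets borel" "r \<in> borel_measurable lebesgue"
  shows "(\<lambda>t. indicator S t * r t) \<in> borel_measurable lebesgue"
  using ind_meas[OF assms(1)] assms(2) by (rule borel_measurable_times)

lemma leb_T:
  fixes r f :: "real \<Rightarrow> real"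
  assumes r0: "\<And>t. 0 \<le> r t" and ftc: "(r has_integral f T) {0..T}"
  shows "integrable lebesgue (\<lambda>t. indicator {0..T} t * r t) \<and>
         integral\<^sup>L lebesgue (\<lambda>t. indicator {0..T} t * r t) = f T"
proof -
  have "r integrable_on {0..T}" using ftc by blast
  then have a: "set_integrable lebesgue {0..T} r"
    using r0 by (intro nonnegative_absolutely_integrable_1) auto
  have "(LINT x:{0..T}|lebesgue. r x) = integral {0..T} r"
    by (rule set_lebesgue_integral_eq_integral(2)[OF a])
  also have "\<dots> = f T" using ftc by (rule integral_unique)
  finally show ?thesis using a by (simp add: set_integrable_def set_lebesgue_integral_def)
qed

lemma leb_inf:
  fixes r f :: "real \<Rightarrow> real"
  assumes r0: "\<And>t. 0 \<le> r t" and rm: "r \<in> borel_measurable lebesgue"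
  and ftc: "\<And>T. 0 \<le> T \<Longrightarrow> (r has_integral f T) {0..T}"
  and fmono: "\<And>x y. 0 \<le> x \<Longrightarrow> x \<le> y \<Longrightarrow> f x \<le> f y"
  and fB: "\<And>T. 0 \<le> T \<Longrightarrow> f T \<le> B"
  shows "integrable lebesgue (\<lambda>t. indicator {0..} t * r t) \<and>
         (\<lambda>n. f (real n)) \<longlonglongrightarrow> integral\<^sup>L lebesgue (\<lambda>t. indicator {0..} t * r t)"
proof -
  have inc: "incseq (\<lambda>n. f (real n))" by (auto simp: incseq_def intro: fmono)
  have bB: "\<forall>i. f (real i) \<le> B" using fB by simp
  obtain l where l: "(\<lambda>n. f (real n)) \<longlonglongrightarrow> l"
    using incseq_convergent[OF inc bB] by blast
  have T: "integrable lebesgue (\<lambda>t. indicator {0..real i} t * r t) \<and>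
         integral\<^sup>L lebesgue (\<lambda>t. indicator {0..real i} t * r t) = f (real i)" for i :: nat
    by (rule leb_T[OF r0 ftc]) simp
  have mono: "AE t in lebesgue. mono (\<lambda>i. indicator {0..real i} t * r t)"
  proof (rule AE_I2)
    fix t show "mono (\<lambda>i. indicator {0..real i} t * r t)"
      unfolding mono_def using r0[of t] by (auto simp: indicator_def)
  qed
  have lim: "AE t in lebesgue. (\<lambda>i. indicator {0..real i} t * r t) \<longlonglongrightarrow> indicator {0..} t * r t"
  proof (rule AE_I2)
    fix t :: real
    obtain N :: nat where N: "t \<le> real N" using real_arch_simple by blast
    have "eventually (\<lambda>i. indicator {0..real i} t * r t = indicator {0..} t * r t) sequentially"
      unfolding eventually_sequentially
      by (rule exI[of _ N]) (use N in \<open>auto simp: indicator_def\<close>)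
    then show "(\<lambda>i. indicator {0..real i} t * r t) \<longlonglongrightarrow> indicator {0..} t * r t"
      by (rule tendsto_eventually)
  qed
  have um: "(\<lambda>t. indicator {0..} t * r t) \<in> borel_measurable lebesgue" by (rule ind_mult_meas[OF _ rm]) simp
  have ilim: "(\<lambda>i. integral\<^sup>L lebesgue (\<lambda>t. indicator {0..real i} t * r t)) \<longlonglongrightarrow> l"
    using l T by simp
  have "integrable lebesgue (\<lambda>t. indicator {0..} t * r t)"
    by (rule integrable_monotone_convergence[OF _ mono lim ilim um]) (use T in blast)
  moreover have "integral\<^sup>L lebesgue (\<lambda>t. indicator {0..} t * r t) = l"
    by (rule integral_monotone_convergence[OF _ mono lim ilim um]) (use T in blast)
  ultimately show ?thesis using l by simp
qed

lemma downset_meas: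
  fixes q :: "real \<Rightarrow> real"
  assumes qm: "q \<in> borel_measurable lebesgue"
  shows "{t. 0 \<le> t \<and> c \<le> q t} \<in> sets lebesgue"
proof -
  have "q -` {c..} \<inter> space lebesgue \<in> sets lebesgue"
    by (rule measurable_sets[OF qm]) simp
  moreover have "{0..} \<in> sets (lebesgue :: real measure)"
    by (rule sets_completionI_sets) simp
  ultimately have "(q -` {c..} \<inter> space lebesgue) \<inter> {0..} \<in> sets lebesgue" by blast
  moreover have "(q -` {c..} \<inter> space lebesgue) \<inter> {0..} = {t. 0 \<le> t \<and> c \<le> q t}" by auto
  ultimately show ?thesis by simp
qed

lemma downset_int:
  fixes r1 r2 q :: "real \<Rightarrow> real"
  assumes r1m: "r1 \<in> borel_measurable lebesgue" and r2m: "r2 \<in> borel_measurable lebesgue"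
  and qm: "q \<in> borel_measurable lebesgue"
  and qanti: "\<And>a b. a \<le> b \<Longrightarrow> q b \<le> q a"
  and leT: "\<And>T. 0 \<le> T \<Longrightarrow> integral\<^sup>L lebesgue (\<lambda>t. indicator {0..T} t * r1 t)
                    \<le> integral\<^sup>L lebesgue (\<lambda>t. indicator {0..T} t * r2 t)"
  and leI: "integral\<^sup>L lebesgue (\<lambda>t. indicator {0..} t * r1 t)
                    \<le> integral\<^sup>L lebesgue (\<lambda>t. indicator {0..} t * r2 t)"
  shows "integral\<^sup>L lebesgue (\<lambda>t. indicator {t. 0 \<le> t \<and> c \<le> q t} t * r1 t)
       \<le> integral\<^sup>L lebesgue (\<lambda>t. indicator {t. 0 \<le> t \<and> c \<le> q t} t * r2 t)"
proof -
  define S where "S = {t. 0 \<le> t \<and> c \<le> q t}"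
  have Sm: "S \<in> sets lebesgue" unfolding S_def by (rule downset_meas[OF qm])
  have im: "(\<lambda>t. indicator S t * r t) \<in> borel_measurable lebesgue"
    if "r \<in> borel_measurable lebesgue" for r :: "real \<Rightarrow> real"
    using borel_measurable_indicator[OF Sm] that by (rule borel_measurable_times)
  have im2: "(\<lambda>t. indicator {0..T} t * r t) \<in> borel_measurable lebesgue"
    if "r \<in> borel_measurable lebesgue" for r :: "real \<Rightarrow> real" and T
    by (rule ind_mult_meas[OF _ that]) simp
  show ?thesis
  proof (cases "\<forall>t\<ge>0. c \<le> q t")
    case True
    then have "S = {0..}" unfolding S_def by auto
    then show ?thesis using leI unfolding S_def by simp
  next
    case False
    then obtain t1 where t1: "0 \<le> t1" "q t1 < c" by auto
    have Sb: "S \<subseteq> {0..t1}"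
    proof
      fix t assume "t \<in> S"
      then have "0 \<le> t" "c \<le> q t" unfolding S_def by auto
      moreover have "t \<le> t1"
      proof (rule ccontr)
        assume "\<not> t \<le> t1" then have "q t \<le> q t1" using qanti by simp
        then show False using t1 \<open>c \<le> q t\<close> by simp
      qed
      ultimately show "t \<in> {0..t1}" by simp
    qed
    show ?thesis
    proof (cases "S = {}")
      case True then show ?thesis unfolding S_def by simp
    next
      case False
      have bdd: "bdd_above S" using Sb by (meson bdd_above_Icc bdd_above_mono)
      define \<tau> where "\<tau> = Sup S"
      obtain s0 where s0: "s0 \<in> S" using False by auto
      have tau0: "0 \<le> \<tau>"
        using cSup_upper[OF s0 bdd] s0 unfolding \<tau>_def S_def by auto
      have eqi: "indicator S t = (indicator {0..\<tau>} t :: real)" if "t \<noteq> \<tau>" for t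
      proof (cases "t < 0")
        case True
        then show ?thesis unfolding S_def by (auto simp: indicator_def)
      next
        case False
        show ?thesis
        proof (cases "t < \<tau>")
          case True
          then obtain s where s: "s \<in> S" "t < s" using less_cSup_iff[OF \<open>S \<noteq> {}\<close> bdd]
            unfolding \<tau>_def by auto
          then have "c \<le> q t" using qanti[of t s] unfolding S_def by auto
          then have "t \<in> S" using \<open>\<not> t < 0\<close> unfolding S_def by auto
          then show ?thesis using True \<open>\<not> t < 0\<close> by (auto simp: indicator_def)
        next
          case False
          then have "\<tau> < t" using that by simp
          then have "t \<notin> S" using cSup_upper[OF _ bdd] unfolding \<tau>_def by fastforce
          then show ?thesis using \<open>\<tau> < t\<close> by (auto simp: indicator_def)
        qed
      qed
      have ae: "AE t in lebesgue. t \<notin> {\<tau>}"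
        by (rule AE_not_in) (rule null_sets_completionI, rule finite_imp_null_set_lborel, simp)
      have e: "integral\<^sup>L lebesgue (\<lambda>t. indicator S t * r t) = integral\<^sup>L lebesgue (\<lambda>t. indicator {0..\<tau>} t * r t)"
        if "r \<in> borel_measurable lebesgue" for r :: "real \<Rightarrow> real"
      proof (rule integral_cong_AE[OF im[OF that] im2[OF that]])
        show "AE t in lebesgue. indicator S t * r t = indicator {0..\<tau>} t * r t"
          using ae by eventually_elim (use eqi in auto)
      qed
      show ?thesis using e[OF r1m] e[OF r2m] leT[OF tau0] unfolding S_def by simp
    qed
  qed
qed

lemma count_bound:
  fixes x :: real and n :: nat
  assumes "0 < n" "0 \<le> x" "x \<le> 1"
  shows "x - 1 / real n \<le> (\<Sum>k\<in>{1..n}. of_bool (real k / real n \<le> x)) / real n \<and>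
         (\<Sum>k\<in>{1..n}. of_bool (real k / real n \<le> x)) / real n \<le> x"
proof -
  define m where "m = nat \<lfloor>real n * x\<rfloor>"
  have fl0: "0 \<le> \<lfloor>real n * x\<rfloor>" using assms by simp
  have mle: "real m \<le> real n * x" using fl0 unfolding m_def by simp
  have mgt: "real n * x < real m + 1" using fl0 unfolding m_def by linarith
  have nx: "real n * x \<le> real n" using assms by (simp add: mult_left_le)
  have mn: "m \<le> n" using mle nx by linarith
  have set: "{1..n} \<inter> {k. real k / real n \<le> x} = {1..m}"
  proof (intro set_eqI iffI)
    fix k assume "k \<in> {1..n} \<inter> {k. real k / real n \<le> x}"
    then have k: "1 \<le> k" "real k / real n \<le> x" by auto
    then have "real k \<le> real n * x" using assms by (simp add: field_simps)
    then have "int k \<le> \<lfloor>real n * x\<rfloor>" by (simp add: le_floor_iff)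
    then have "k \<le> m" unfolding m_def by linarith
    then show "k \<in> {1..m}" using k by simp
  next
    fix k assume "k \<in> {1..m}"
    then have k: "1 \<le> k" "k \<le> m" by auto
    then have "real k \<le> real n * x" using mle by linarith
    then have "real k / real n \<le> x" using assms by (simp add: field_simps)
    then show "k \<in> {1..n} \<inter> {k. real k / real n \<le> x}" using k mn by simp
  qed
  have "(\<Sum>k\<in>{1..n}. of_bool (real k / real n \<le> x)) = (real (card ({1..n} \<inter> {k. real k / real n \<le> x})) :: real)"
    by (rule sum_of_bool_eq[OF finite_atLeastAtMost finite_atLeastAtMost])
  also have "\<dots> = real m" unfolding set by simp
  finally have sm: "(\<Sum>k\<in>{1..n}. of_bool (real k / real n \<le> x)) = (real m :: real)" .
  have np: "0 < real n" using assms by simp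
  have "real n * x - 1 \<le> real m" using mgt by linarith
  then have "(real n * x - 1) / real n \<le> real m / real n" using np by (simp add: divide_right_mono)
  moreover have "(real n * x - 1) / real n = x - 1 / real n" using np by (simp add: field_simps)
  ultimately have "x - 1 / real n \<le> real m / real n" by simp
  moreover have "real m / real n \<le> x" using mle np by (simp add: field_simps)
  ultimately show ?thesis unfolding sm by simp
qed

lemma cmp:
  fixes r1 r2 q :: "real \<Rightarrow> real"
  assumes r1m: "r1 \<in> borel_measurable lebesgue" and r2m: "r2 \<in> borel_measurable lebesgue"
  and qm: "q \<in> borel_measurable lebesgue"
  and qanti: "\<And>a b. a \<le> b \<Longrightarrow> q b \<le> q a"
  and q01: "\<And>t. 0 \<le> q t \<and> q t \<le> 1"
  and r10: "\<And>t. 0 \<le> r1 t" and r20: "\<And>t. 0 \<le> r2 t"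
  and i1: "integrable lebesgue (\<lambda>t. indicator {0..} t * r1 t)"
  and i2: "integrable lebesgue (\<lambda>t. indicator {0..} t * r2 t)"
  and leT: "\<And>T. 0 \<le> T \<Longrightarrow> integral\<^sup>L lebesgue (\<lambda>t. indicator {0..T} t * r1 t)
                    \<le> integral\<^sup>L lebesgue (\<lambda>t. indicator {0..T} t * r2 t)"
  and leI: "integral\<^sup>L lebesgue (\<lambda>t. indicator {0..} t * r1 t)
                    \<le> integral\<^sup>L lebesgue (\<lambda>t. indicator {0..} t * r2 t)"
  shows "integral\<^sup>L lebesgue (\<lambda>t. indicator {0..} t * r1 t * q t)
       \<le> integral\<^sup>L lebesgue (\<lambda>t. indicator {0..} t * r2 t * q t)"
proof -
  define S where "S c = {t. 0 \<le> t \<and> c \<le> q t}" for c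
  have Sm: "S c \<in> sets lebesgue" for c unfolding S_def by (rule downset_meas[OF qm])
  have DS: "integral\<^sup>L lebesgue (\<lambda>t. indicator (S c) t * r1 t)
       \<le> integral\<^sup>L lebesgue (\<lambda>t. indicator (S c) t * r2 t)" for c
    unfolding S_def by (rule downset_int[OF r1m r2m qm qanti leT leI])
  have im0: "(\<lambda>t. indicator {0..} t * r t) \<in> borel_measurable lebesgue"
    if "r \<in> borel_measurable lebesgue" for r :: "real \<Rightarrow> real"
    by (rule ind_mult_meas[OF _ that]) simp
  have intS: "integrable lebesgue (\<lambda>t. indicator (S c) t * r t)"
    if "r \<in> borel_measurable lebesgue" "integrable lebesgue (\<lambda>t. indicator {0..} t * r t)" for r :: "real \<Rightarrow> real" and c :: real
  proof (rule Bochner_Integration.integrable_bound[OF that(2)])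
    show "(\<lambda>t. indicator (S c) t * r t) \<in> borel_measurable lebesgue"
      using borel_measurable_indicator[OF Sm] that(1) by (rule borel_measurable_times)
    show "AE t in lebesgue. norm (indicator (S c) t * r t) \<le> norm (indicator {0..} t * r t)"
      by (rule AE_I2) (auto simp: indicator_def S_def)
  qed
  have intH: "integrable lebesgue (\<lambda>t. indicator {0..} t * r t * h t)"
    if "r \<in> borel_measurable lebesgue" "integrable lebesgue (\<lambda>t. indicator {0..} t * r t)"
       "h \<in> borel_measurable lebesgue" "\<And>t. \<bar>h t\<bar> \<le> 1" for r h :: "real \<Rightarrow> real"
  proof (rule Bochner_Integration.integrable_bound[OF that(2)])
    show "(\<lambda>t. indicator {0..} t * r t * h t) \<in> borel_measurable lebesgue"
      using im0[OF that(1)] that(3) by (rule borel_measurable_times)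
    show "AE t in lebesgue. norm (indicator {0..} t * r t * h t) \<le> norm (indicator {0..} t * r t)"
    proof (rule AE_I2)
      fix t
      have "\<bar>indicator {0..} t * r t\<bar> * \<bar>h t\<bar> \<le> \<bar>indicator {0..} t * r t\<bar> * 1"
        by (intro mult_left_mono that(4)) simp
      then show "norm (indicator {0..} t * r t * h t) \<le> norm (indicator {0..} t * r t)"
        by (simp add: abs_mult)
    qed
  qed
  define A1 where "A1 = integral\<^sup>L lebesgue (\<lambda>t. indicator {0..} t * r1 t * q t)"
  define A2 where "A2 = integral\<^sup>L lebesgue (\<lambda>t. indicator {0..} t * r2 t * q t)"
  define I1 where "I1 = integral\<^sup>L lebesgue (\<lambda>t. indicator {0..} t * r1 t)"
  have qabs: "\<bar>q t\<bar> \<le> 1" for t using q01[of t] by simp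
  have step: "A1 \<le> A2 + I1 / real n" if n: "0 < n" for n :: nat
  proof -
    define qn where "qn t = (1 / real n) * (\<Sum>k\<in>{1..n}. indicator (S (real k / real n)) t)" for t
    have qnm: "qn \<in> borel_measurable lebesgue" unfolding qn_def
      using borel_measurable_indicator[OF Sm] by measurable
    have qnb: "q t - 1 / real n \<le> qn t \<and> qn t \<le> q t" if "0 \<le> t" for t
    proof -
      have "qn t = (\<Sum>k\<in>{1..n}. of_bool (real k / real n \<le> q t)) / real n"
        unfolding qn_def S_def using that by (simp add: indicator_def)
      then show ?thesis using count_bound[OF n, of "q t"] q01[of t] by simp
    qed
    have qn01: "0 \<le> qn t \<and> qn t \<le> 1" for t
    proof -
      have "(\<Sum>k\<in>{1..n}. indicator (S (real k / real n)) t) \<le> (\<Sum>k\<in>{1..n}. (1::real))"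
        by (intro sum_mono) (simp add: indicator_def)
      moreover have "0 \<le> (\<Sum>k\<in>{1..n}. indicator (S (real k / real n)) t :: real)"
        by (intro sum_nonneg) simp
      ultimately show ?thesis unfolding qn_def using n by (simp add: field_simps)
    qed
    have qnabs: "\<bar>qn t\<bar> \<le> 1" for t using qn01[of t] by simp
    have Beq: "integral\<^sup>L lebesgue (\<lambda>t. indicator {0..} t * r t * qn t)
       = (1 / real n) * (\<Sum>k\<in>{1..n}. integral\<^sup>L lebesgue (\<lambda>t. indicator (S (real k / real n)) t * r t))"
      if "r \<in> borel_measurable lebesgue" "integrable lebesgue (\<lambda>t. indicator {0..} t * r t)" for r :: "real \<Rightarrow> real"
    proof -
      have pw: "indicator {0..} t * r t * qn t
          = (1 / real n) * (\<Sum>k\<in>{1..n}. indicator (S (real k / real n)) t * r t)" for t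
      proof (cases "0 \<le> t")
        case True
        then have "indicator {0..} t * r t * qn t = r t * ((1 / real n) * (\<Sum>k\<in>{1..n}. indicator (S (real k / real n)) t))"
          unfolding qn_def by simp
        also have "\<dots> = (1 / real n) * (\<Sum>k\<in>{1..n}. r t * indicator (S (real k / real n)) t)"
          by (simp only: sum_distrib_left mult.left_commute)
        finally show ?thesis by (simp only: mult.commute)
      next
        case False
        then show ?thesis unfolding qn_def S_def by (simp add: indicator_def)
      qed
      have "integral\<^sup>L lebesgue (\<lambda>t. indicator {0..} t * r t * qn t)
          = integral\<^sup>L lebesgue (\<lambda>t. (1 / real n) * (\<Sum>k\<in>{1..n}. indicator (S (real k / real n)) t * r t))"
        unfolding pw ..
      also have "\<dots> = (1 / real n) * integral\<^sup>L lebesgue (\<lambda>t. \<Sum>k\<in>{1..n}. indicator (S (real k / real n)) t * r t)"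
        by (rule integral_mult_right_zero)
      also have "\<dots> = (1 / real n) * (\<Sum>k\<in>{1..n}. integral\<^sup>L lebesgue (\<lambda>t. indicator (S (real k / real n)) t * r t))"
        by (subst Bochner_Integration.integral_sum) (use intS[OF that] in auto)
      finally show ?thesis .
    qed
    have B12: "integral\<^sup>L lebesgue (\<lambda>t. indicator {0..} t * r1 t * qn t)
             \<le> integral\<^sup>L lebesgue (\<lambda>t. indicator {0..} t * r2 t * qn t)"
      unfolding Beq[OF r1m i1] Beq[OF r2m i2]
      by (intro mult_left_mono sum_mono DS) simp
    have A1B: "A1 \<le> integral\<^sup>L lebesgue (\<lambda>t. indicator {0..} t * r1 t * qn t) + I1 / real n"
    proof -
      have "A1 \<le> integral\<^sup>L lebesgue (\<lambda>t. indicator {0..} t * r1 t * qn t + (1 / real n) * (indicator {0..} t * r1 t))"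
        unfolding A1_def
      proof (rule integral_mono)
        show "integrable lebesgue (\<lambda>t. indicator {0..} t * r1 t * q t)"
          by (rule intH[OF r1m i1 qm qabs])
        show "integrable lebesgue (\<lambda>t. indicator {0..} t * r1 t * qn t + (1 / real n) * (indicator {0..} t * r1 t))"
          by (intro Bochner_Integration.integrable_add integrable_mult_right intH[OF r1m i1 qnm qnabs] i1)
        fix t :: real
        show "indicator {0..} t * r1 t * q t \<le> indicator {0..} t * r1 t * qn t + (1 / real n) * (indicator {0..} t * r1 t)"
        proof (cases "0 \<le> t")
          case True
          have "r1 t * q t \<le> r1 t * (qn t + 1 / real n)"
            using qnb[OF True] r10[of t] by (intro mult_left_mono) auto
          then show ?thesis using True by (simp add: algebra_simps)
        qed simp
      qed
      also have "\<dots> = integral\<^sup>L lebesgue (\<lambda>t. indicator {0..} t * r1 t * qn t) + (1 / real n) * I1"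
        by (subst Bochner_Integration.integral_add)
           (auto intro!: integrable_mult_right intH[OF r1m i1 qnm qnabs] i1 simp: I1_def)
      finally show ?thesis by simp
    qed
    have BA2: "integral\<^sup>L lebesgue (\<lambda>t. indicator {0..} t * r2 t * qn t) \<le> A2"
      unfolding A2_def
    proof (rule integral_mono)
      show "integrable lebesgue (\<lambda>t. indicator {0..} t * r2 t * qn t)"
        by (rule intH[OF r2m i2 qnm qnabs])
      show "integrable lebesgue (\<lambda>t. indicator {0..} t * r2 t * q t)"
        by (rule intH[OF r2m i2 qm qabs])
      fix t :: real
      show "indicator {0..} t * r2 t * qn t \<le> indicator {0..} t * r2 t * q t"
      proof (cases "0 \<le> t")
        case True
        then show ?thesis using qnb[OF True] r20[of t] by (simp add: mult_left_mono)
      qed simp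
    qed
    show ?thesis using A1B B12 BA2 by linarith
  qed
  have I10: "0 \<le> I1" unfolding I1_def by (rule Bochner_Integration.integral_nonneg) (simp add: r10)
  show ?thesis
  proof (rule ccontr)
    assume "\<not> ?thesis"
    then have d: "0 < A1 - A2" unfolding A1_def A2_def by simp
    obtain n :: nat where n: "I1 / (A1 - A2) < real n" using reals_Archimedean2 by blast
    have "0 \<le> I1 / (A1 - A2)" using I10 d by simp
    then have np: "0 < real n" using n by linarith
    then have "I1 < real n * (A1 - A2)" using n d by (simp add: field_simps)
    moreover have "A1 \<le> A2 + I1 / real n" using step np by simp
    then have "A1 * real n \<le> A2 * real n + I1" using np by (simp add: field_simps)
    ultimately show False by (simp add: algebra_simps)
  qed
qed



lemma pkg:
  assumes L: "L \<in> M2" and x: "0 \<le> x"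
  shows "\<exists>r E. (\<forall>t. 0 \<le> r t \<and> r t \<le> 1) \<and> (\<forall>a b. a \<le> b \<longrightarrow> r b \<le> r a) \<and> countable E \<and>
     (\<forall>t. 0 < t \<longrightarrow> t \<notin> E \<longrightarrow> deriv (\<lambda>y. L x y) t = r t) \<and> r \<in> borel_measurable lebesgue \<and>
     (\<forall>T\<ge>0. integrable lebesgue (\<lambda>t. indicator {0..T} t * r t) \<and>
             integral\<^sup>L lebesgue (\<lambda>t. indicator {0..T} t * r t) = L x T) \<and>
     integrable lebesgue (\<lambda>t. indicator {0..} t * r t) \<and>
     (\<lambda>n. L x (real n)) \<longlonglongrightarrow> integral\<^sup>L lebesgue (\<lambda>t. indicator {0..} t * r t)"
proof -
  define f where "f = (\<lambda>y. L x y)"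
  have f0: "f 0 = 0" unfolding f_def using M2_zero[OF L x] .
  have lip: "0 \<le> f y - f z \<and> f y - f z \<le> y - z" if "0 \<le> z" "z \<le> y" for z y
    unfolding f_def using M2_lip2[OF L x that] .
  have scal: "f (l*q) - f (l*p) \<le> l * (f q - f p)" if "0 \<le> p" "p \<le> q" "1 \<le> l" for p q l
  proof -
    have lp: "0 < l" using that by simp
    have xl: "0 \<le> x / l" using x lp by simp
    have xe: "l * (x / l) = x" using lp by simp
    have h1: "L x (l*q) = l * L (x/l) q" using M2_homog[OF L lp xl, of q] that xe by simp
    have h2: "L x (l*p) = l * L (x/l) p" using M2_homog[OF L lp xl, of p] that xe by simp
    have xlx: "x / l \<le> x" using x that by (simp add: divide_le_eq mult_le_cancel_left1 mult.commute[of l x])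
    have "0 \<le> L x q - L x p - L (x/l) q + L (x/l) p" using M2_2inc[OF L xl xlx that(1,2)] .
    then have "L (x/l) q - L (x/l) p \<le> L x q - L x p" by simp
    then have "l * (L (x/l) q - L (x/l) p) \<le> l * (L x q - L x p)" using lp by simp
    then show ?thesis unfolding f_def h1 h2 by (simp add: algebra_simps)
  qed
  obtain r E where r01: "\<forall>t. 0 \<le> r t \<and> r t \<le> 1" and ranti: "\<forall>a b. a \<le> b \<longrightarrow> r b \<le> r a"
    and cE: "countable E" and der: "\<forall>t. 0 < t \<longrightarrow> t \<notin> E \<longrightarrow> (f has_real_derivative r t) (at t)"
    and ftc: "\<forall>T\<ge>0. (r has_integral f T) {0..T}"
    using oned[OF f0 lip scal] by blast
  have rm: "r \<in> borel_measurable lebesgue" by (rule antimono_meas) (use ranti in auto)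
  have T: "integrable lebesgue (\<lambda>t. indicator {0..T} t * r t) \<and>
             integral\<^sup>L lebesgue (\<lambda>t. indicator {0..T} t * r t) = L x T" if "0 \<le> T" for T
    using leb_T[of r f T] r01 ftc that unfolding f_def by auto
  have fB: "f T \<le> x" if "0 \<le> T" for T
  proof -
    have "L x T - L 0 T \<le> x - 0" using M2_lip2[OF M2_transpose[OF L] that order_refl x] by simp
    moreover have "L 0 T = 0" using M2_zero[OF M2_transpose[OF L] that] by simp
    ultimately show ?thesis unfolding f_def by simp
  qed
  have I: "integrable lebesgue (\<lambda>t. indicator {0..} t * r t) \<and>
         (\<lambda>n. f (real n)) \<longlonglongrightarrow> integral\<^sup>L lebesgue (\<lambda>t. indicator {0..} t * r t)"
    by (rule leb_inf[OF _ rm, of f x]) (use r01 ftc lip fB in auto)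
  have d: "\<forall>t. 0 < t \<longrightarrow> t \<notin> E \<longrightarrow> deriv (\<lambda>y. L x y) t = r t"
    using der unfolding f_def by (auto intro: DERIV_imp_deriv)
  show ?thesis
    by (rule exI[of _ r], rule exI[of _ E]) (use r01 ranti cE d rm T I in \<open>auto simp: f_def\<close>)
qed

lemma AE_countable_leb:
  assumes "countable N"
  shows "AE t in lebesgue. (t::real) \<notin> N"
  by (rule AE_not_in, rule null_sets_completionI, rule countable_imp_null_set_lborel[OF assms])

lemma int_cong_AE_leb:
  fixes f g :: "real \<Rightarrow> real"
  assumes "f \<in> borel_measurable lebesgue" "AE x in lebesgue. f x = g x"
  shows "integral\<^sup>L lebesgue g = integral\<^sup>L lebesgue f"
proof -
  have "g \<in> borel_measurable lebesgue" by (rule borel_measurable_AE[OF assms])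
  moreover have "AE x in lebesgue. g x = f x" using assms(2) by auto
  ultimately show ?thesis using assms(1) by (intro integral_cong_AE)
qed

lemma deriv_min:
  fixes t w :: real
  assumes "t \<noteq> w"
  shows "deriv (\<lambda>x. min x w) t = (if t < w then 1 else 0)"
proof (cases "t < w")
  case True
  have "((\<lambda>x. x) has_real_derivative 1) (at t)" by (rule DERIV_ident)
  then have "((\<lambda>x. min x w) has_real_derivative 1) (at t)"
    by (rule has_field_derivative_transform_within_open[of _ _ _ "{..<w}"]) (use True in auto)
  then show ?thesis using True by (simp add: DERIV_imp_deriv)
next
  case False
  then have "w < t" using assms by simp
  have "((\<lambda>x. w) has_real_derivative 0) (at t)" by (rule DERIV_const)
  then have "((\<lambda>x. min x w) has_real_derivative 0) (at t)"
    by (rule has_field_derivative_transform_within_open[of _ _ _ "{w<..}"]) (use \<open>w < t\<close> in auto)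
  then show ?thesis using False by (simp add: DERIV_imp_deriv)
qed

lemma markov_eq:
  fixes L1 L :: "real \<Rightarrow> real \<Rightarrow> real" and w1 w2 :: real
  shows "markov_prod L1 L w1 w2 = integral\<^sup>L lebesgue (\<lambda>t. indicator {0..} t * (deriv (\<lambda>x. L1 w1 x) t * deriv (\<lambda>x. L x w2) t))"
  unfolding markov_prod_def set_lebesgue_integral_def by simp

theorem mainTheorem10:
  assumes "L1 \<in> M2" and "L2 \<in> M2"
  shows "(\<forall>w1 \<ge> 0. \<forall>w2 \<ge> 0. L1 w1 w2 \<le> L2 w1 w2) \<longleftrightarrow>
         (\<forall>L \<in> M2. \<forall>w1 \<ge> 0. \<forall>w2 \<ge> 0. markov_prod L1 L w1 w2 \<le> markov_prod L2 L w1 w2)"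
proof
  assume H: "\<forall>w1 \<ge> 0. \<forall>w2 \<ge> 0. L1 w1 w2 \<le> L2 w1 w2"
  show "\<forall>L \<in> M2. \<forall>w1 \<ge> 0. \<forall>w2 \<ge> 0. markov_prod L1 L w1 w2 \<le> markov_prod L2 L w1 w2"
  proof (intro ballI allI impI)
    fix L :: "real \<Rightarrow> real \<Rightarrow> real" and w1 w2 :: real
    assume L: "L \<in> M2" and w1: "0 \<le> w1" and w2: "0 \<le> w2"
    obtain r1 E1 where r1: "\<forall>t. 0 \<le> r1 t \<and> r1 t \<le> 1" "countable E1"
      "\<forall>t. 0 < t \<longrightarrow> t \<notin> E1 \<longrightarrow> deriv (\<lambda>y. L1 w1 y) t = r1 t" "r1 \<in> borel_measurable lebesgue"
      "\<forall>T\<ge>0. integrable lebesgue (\<lambda>t. indicator {0..T} t * r1 t) \<and>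
             integral\<^sup>L lebesgue (\<lambda>t. indicator {0..T} t * r1 t) = L1 w1 T"
      "integrable lebesgue (\<lambda>t. indicator {0..} t * r1 t)"
      "(\<lambda>n. L1 w1 (real n)) \<longlonglongrightarrow> integral\<^sup>L lebesgue (\<lambda>t. indicator {0..} t * r1 t)"
      using pkg[OF assms(1) w1] by blast
    obtain r2 E2 where r2: "\<forall>t. 0 \<le> r2 t \<and> r2 t \<le> 1" "countable E2"
      "\<forall>t. 0 < t \<longrightarrow> t \<notin> E2 \<longrightarrow> deriv (\<lambda>y. L2 w1 y) t = r2 t" "r2 \<in> borel_measurable lebesgue"
      "\<forall>T\<ge>0. integrable lebesgue (\<lambda>t. indicator {0..T} t * r2 t) \<and>
             integral\<^sup>L lebesgue (\<lambda>t. indicator {0..T} t * r2 t) = L2 w1 T"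
      "integrable lebesgue (\<lambda>t. indicator {0..} t * r2 t)"
      "(\<lambda>n. L2 w1 (real n)) \<longlonglongrightarrow> integral\<^sup>L lebesgue (\<lambda>t. indicator {0..} t * r2 t)"
      using pkg[OF assms(2) w1] by blast
    obtain q Eq where q: "\<forall>t. 0 \<le> q t \<and> q t \<le> 1" "\<forall>a b. a \<le> b \<longrightarrow> q b \<le> q a" "countable Eq"
      "\<forall>t. 0 < t \<longrightarrow> t \<notin> Eq \<longrightarrow> deriv (\<lambda>y. L y w2) t = q t" "q \<in> borel_measurable lebesgue"
      using pkg[OF M2_transpose[OF L] w2] by auto
    have meq: "markov_prod Li L w1 w2 = integral\<^sup>L lebesgue (\<lambda>t. indicator {0..} t * ri t * q t)"
      if "\<forall>t. 0 < t \<longrightarrow> t \<notin> Ei \<longrightarrow> deriv (\<lambda>y. Li w1 y) t = ri t" "countable Ei"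
         "ri \<in> borel_measurable lebesgue" for Li Ei and ri :: "real \<Rightarrow> real"
    proof -
      have cN: "countable ({0} \<union> Ei \<union> Eq)" using that(2) q(3) by simp
      have m: "(\<lambda>t. indicator {0..} t * ri t * q t) \<in> borel_measurable lebesgue"
        using ind_mult_meas[OF _ that(3), of "{0..}"] q(5) by (simp add: borel_measurable_times)
      have "AE t in lebesgue. indicator {0..} t * ri t * q t =
            indicator {0..} t * (deriv (\<lambda>x. Li w1 x) t * deriv (\<lambda>x. L x w2) t)"
        using AE_countable_leb[OF cN]
      proof eventually_elim
        case (elim t)
        show ?case
        proof (cases "t < 0")
          case True then show ?thesis by simp
        next
          case False
          then have "0 < t" using elim by auto
          then show ?thesis using that(1) q(4) elim by auto
        qed
      qed
      then show ?thesis unfolding markov_eq by (rule int_cong_AE_leb[OF m])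
    qed
    have "integral\<^sup>L lebesgue (\<lambda>t. indicator {0..} t * r1 t * q t)
       \<le> integral\<^sup>L lebesgue (\<lambda>t. indicator {0..} t * r2 t * q t)"
    proof (rule cmp[OF r1(4) r2(4) q(5)])
      show "\<And>a b. a \<le> b \<Longrightarrow> q b \<le> q a" using q(2) by auto
      show "\<And>t. 0 \<le> q t \<and> q t \<le> 1" using q(1) by auto
      show "\<And>t. 0 \<le> r1 t" "\<And>t. 0 \<le> r2 t" using r1(1) r2(1) by auto
      show "integrable lebesgue (\<lambda>t. indicator {0..} t * r1 t)"
           "integrable lebesgue (\<lambda>t. indicator {0..} t * r2 t)" using r1(6) r2(6) .
      show "\<And>T. 0 \<le> T \<Longrightarrow> integral\<^sup>L lebesgue (\<lambda>t. indicator {0..T} t * r1 t)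
                    \<le> integral\<^sup>L lebesgue (\<lambda>t. indicator {0..T} t * r2 t)"
        using r1(5) r2(5) H w1 by auto
      show "integral\<^sup>L lebesgue (\<lambda>t. indicator {0..} t * r1 t)
                    \<le> integral\<^sup>L lebesgue (\<lambda>t. indicator {0..} t * r2 t)"
        by (rule LIMSEQ_le[OF r1(7) r2(7)]) (use H w1 in auto)
    qed
    then show "markov_prod L1 L w1 w2 \<le> markov_prod L2 L w1 w2"
      using meq[where Li=L1 and Ei=E1 and ri=r1, OF r1(3) r1(2) r1(4)] meq[where Li=L2 and Ei=E2 and ri=r2, OF r2(3) r2(2) r2(4)] by simp
  qed
next
  assume H: "\<forall>L \<in> M2. \<forall>w1 \<ge> 0. \<forall>w2 \<ge> 0. markov_prod L1 L w1 w2 \<le> markov_prod L2 L w1 w2"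
  show "\<forall>w1 \<ge> 0. \<forall>w2 \<ge> 0. L1 w1 w2 \<le> L2 w1 w2"
  proof (intro allI impI)
    fix w1 w2 :: real assume w1: "0 \<le> w1" and w2: "0 \<le> w2"
    have meq: "markov_prod Li (\<lambda>x y. min x y) w1 w2 = Li w1 w2" if Li: "Li \<in> M2" for Li
    proof -
      obtain ri Ei where ri: "countable Ei"
        "\<forall>t. 0 < t \<longrightarrow> t \<notin> Ei \<longrightarrow> deriv (\<lambda>y. Li w1 y) t = ri t" "ri \<in> borel_measurable lebesgue"
        "\<forall>T\<ge>0. integrable lebesgue (\<lambda>t. indicator {0..T} t * ri t) \<and>
             integral\<^sup>L lebesgue (\<lambda>t. indicator {0..T} t * ri t) = Li w1 T"
        using pkg[OF Li w1] by blast
      have cN: "countable ({0, w2} \<union> Ei)" using ri(1) by simp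
      have m: "(\<lambda>t. indicator {0..w2} t * ri t) \<in> borel_measurable lebesgue"
        by (rule ind_mult_meas[OF _ ri(3)]) simp
      have "AE t in lebesgue. indicator {0..w2} t * ri t =
            indicator {0..} t * (deriv (\<lambda>x. Li w1 x) t * deriv (\<lambda>x. min x w2) t)"
        using AE_countable_leb[OF cN]
      proof eventually_elim
        case (elim t)
        show ?case
        proof (cases "t < 0")
          case True then show ?thesis by simp
        next
          case False
          then have "0 < t" using elim by auto
          then show ?thesis using ri(2) elim deriv_min[of t w2] by (auto simp: indicator_def)
        qed
      qed
      then have "markov_prod Li (\<lambda>x y. min x y) w1 w2 = integral\<^sup>L lebesgue (\<lambda>t. indicator {0..w2} t * ri t)"
        unfolding markov_eq by (rule int_cong_AE_leb[OF m])
      then show ?thesis using ri(4) w2 by simp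
    qed
    have "markov_prod L1 (\<lambda>x y. min x y) w1 w2 \<le> markov_prod L2 (\<lambda>x y. min x y) w1 w2"
      using H M2_min w1 w2 by blast
    then show "L1 w1 w2 \<le> L2 w1 w2" using meq[OF assms(1)] meq[OF assms(2)] by simp
  qed
qed


end
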